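(* Let $\Sigma$ be a finite alphabet and $L\subseteq\Sigma^{++}$ a local language. Then $L$ is regional if and only if there exist $n\ge 1$ and simple regional tile sets $\theta_1,\dots,\theta_n$ over $\Sigma\cup\{\#\}$ such that $L=\bigcup_{1\le i\le n}LOC(\theta_i)$.
   Context: A picture over $\Sigma$ is a nonempty rectangular array of symbols of $\Sigma$, $\Sigma^{++}$ the set of all of them; $p(i,j)$ is the pixel in row $i$, column $j$; for $\#\notin\Sigma$, $\hat p$ is $p$ surrounded by a one-pixel frame of $\#$'s. A tile is a $2\times 2$ picture; $\llbracket q\rrbracket$ is the set of all $2\times2$ subpictures (on consecutive rows and columns) of $q$. For a finite set $\theta$ of tiles over $\Sigma\cup\{\#\}$, $LOC(\theta)=\{p\in\Sigma^{++}:\llbracket\hat p\rrbracket\subseteq\theta\}$; $L$ is local if $L=LOC(\theta)$ for some such $\theta$. A subdomain of $p$ is a rectangle $\{x,\dots,x'\}\times\{y,\dots,y'\}$ of positions; it is $C$-homogeneous (label $C$) if all its pixels equal $C$. A homogeneous partition of $p$ is a partition of its set of positions into homogeneous subdomains; it is regional if distinct subdomains have distinct labels; $p$ is regional if it admits a regional homogeneous partition; a language is regional if all its pictures are regional. Adjacency relations: for a tile $t$ define $\mathcal H_t,\mathcal V_t\subseteq(\Sigma\cup\{\#\})^2$ by: for $i=1,2$, $t(i,1)\,\mathcal H_t\,t(i,2)$ iff $t(i,1)\ne t(i,2)$; for $j=1,2$, $t(1,j)\,\mathcal V_t\,t(2,j)$ iff $t(1,j)\neq t(2,j)$. Let $\mathcal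 A_t=\mathcal H_t\cup\mathcal V_t$, $\mathcal A'_t=\mathcal H_t^{-1}\cup\mathcal V_t$, and for a tile set $\theta$ let $\mathcal A_\theta=\bigcup_{t\in\theta}\mathcal A_t$, $\mathcal A'_\theta=\bigcup_{t\in\theta}\mathcal A'_t$. A tile set $\theta$ is simple regional if both directed graphs on vertex set $\Sigma$ with edge relations $\mathcal A_\theta\cap\Sigma^2$ and $\mathcal A'_\theta\cap\Sigma^2$ are acyclic. *)

theory Defs
  imports Main
begin

text \<open>Pictures are represented as nonempty rectangular lists of rows (0-indexed);
  p(i,j) is p ! i ! j. The border symbol # is None, a symbol a of Sigma is Some a.\<close>

type_synonym 'a picture = "'a list list"

definition nrows :: "'a picture \<Rightarrow> nat" where "nrows p = length p"
definition ncols :: "'a picture \<Rightarrow> nat" where "ncols p = length (hd p)"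

definition pix :: "'a picture \<Rightarrow> nat \<Rightarrow> nat \<Rightarrow> 'a" where "pix p i j = p ! i ! j"

definition is_picture :: "'a picture \<Rightarrow> bool" where
  "is_picture p \<longleftrightarrow> p \<noteq> [] \<and> hd p \<noteq> [] \<and> (\<forall>r\<in>set p. length r = length (hd p))"

definition pictures :: "'a set \<Rightarrow> 'a picture set" where
  "pictures \<Sigma> = {p. is_picture p \<and> (\<forall>r\<in>set p. set r \<subseteq> \<Sigma>)}"

definition frame :: "'a picture \<Rightarrow> 'a option picture" where
  "frame p = [replicate (ncols p + 2) None] @
             map (\<lambda>r. [None] @ map Some r @ [None]) p @
             [replicate (ncols p + 2) None]"

definition subtiles :: "'b picture \<Rightarrow> 'b picture set" where
  "subtiles q = {[[pix q i j, pix q i (j+1)], [pix q (i+1) j, pix q (i+1) (j+1)]] | i j.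
                  i + 1 < nrows q \<and> j + 1 < ncols q}"

definition is_tile_over :: "'a set \<Rightarrow> 'a option picture \<Rightarrow> bool" where
  "is_tile_over \<Sigma> t \<longleftrightarrow> length t = 2 \<and> (\<forall>r\<in>set t. length r = 2 \<and> set r \<subseteq> insert None (Some ` \<Sigma>))"

definition tileset :: "'a set \<Rightarrow> 'a option picture set \<Rightarrow> bool" where
  "tileset \<Sigma> \<theta> \<longleftrightarrow> finite \<theta> \<and> (\<forall>t\<in>\<theta>. is_tile_over \<Sigma> t)"

definition LOC :: "'a set \<Rightarrow> 'a option picture set \<Rightarrow> 'a picture set" where
  "LOC \<Sigma> \<theta> = {p \<in> pictures \<Sigma>. subtiles (frame p) \<subseteq> \<theta>}"

definition local_lang :: "'a set \<Rightarrow> 'a picture set \<Rightarrow> bool" where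
  "local_lang \<Sigma> L \<longleftrightarrow> (\<exists>\<theta>. tileset \<Sigma> \<theta> \<and> L = LOC \<Sigma> \<theta>)"

definition positions :: "'a picture \<Rightarrow> (nat \<times> nat) set" where
  "positions p = {0..<nrows p} \<times> {0..<ncols p}"

definition is_subdomain :: "'a picture \<Rightarrow> (nat \<times> nat) set \<Rightarrow> bool" where
  "is_subdomain p D \<longleftrightarrow> (\<exists>x x' y y'. x \<le> x' \<and> x' < nrows p \<and> y \<le> y' \<and> y' < ncols p \<and>
                          D = {x..x'} \<times> {y..y'})"

definition homogeneous :: "'a picture \<Rightarrow> (nat \<times> nat) set \<Rightarrow> 'a \<Rightarrow> bool" where
  "homogeneous p D c \<longleftrightarrow> (\<forall>(i,j)\<in>D. pix p i j = c)"

definition homogeneous_partition :: "'a picture \<Rightarrow> (nat \<times> nat) set set \<Rightarrow> bool" where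
  "homogeneous_partition p P \<longleftrightarrow>
     \<Union>P = positions p \<and>
     (\<forall>D\<in>P. is_subdomain p D \<and> (\<exists>c. homogeneous p D c)) \<and>
     (\<forall>D\<in>P. \<forall>D'\<in>P. D \<noteq> D' \<longrightarrow> D \<inter> D' = {})"

definition regional_partition :: "'a picture \<Rightarrow> (nat \<times> nat) set set \<Rightarrow> bool" where
  "regional_partition p P \<longleftrightarrow> homogeneous_partition p P \<and>
     (\<exists>lab. (\<forall>D\<in>P. homogeneous p D (lab D)) \<and> inj_on lab P)"

definition regional_pic :: "'a picture \<Rightarrow> bool" where
  "regional_pic p \<longleftrightarrow> (\<exists>P. regional_partition p P)"

definition regional_lang :: "'a picture set \<Rightarrow> bool" where
  "regional_lang L \<longleftrightarrow> (\<forall>p\<in>L. regional_pic p)"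

text \<open>Adjacency relations of a tile (indices 0/1 instead of 1/2).\<close>
definition H_rel :: "'b picture \<Rightarrow> ('b \<times> 'b) set" where
  "H_rel t = {(pix t i 0, pix t i 1) | i. i < 2 \<and> pix t i 0 \<noteq> pix t i 1}"

definition V_rel :: "'b picture \<Rightarrow> ('b \<times> 'b) set" where
  "V_rel t = {(pix t 0 j, pix t 1 j) | j. j < 2 \<and> pix t 0 j \<noteq> pix t 1 j}"

definition A_tile :: "'b picture \<Rightarrow> ('b \<times> 'b) set" where
  "A_tile t = H_rel t \<union> V_rel t"

definition A'_tile :: "'b picture \<Rightarrow> ('b \<times> 'b) set" where
  "A'_tile t = (H_rel t)\<inverse> \<union> V_rel t"

definition A_set :: "'b picture set \<Rightarrow> ('b \<times> 'b) set" where
  "A_set \<theta> = (\<Union>t\<in>\<theta>. A_tile t)"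

definition A'_set :: "'b picture set \<Rightarrow> ('b \<times> 'b) set" where
  "A'_set \<theta> = (\<Union>t\<in>\<theta>. A'_tile t)"

definition restrict_Sigma :: "'a set \<Rightarrow> ('a option \<times> 'a option) set \<Rightarrow> ('a \<times> 'a) set" where
  "restrict_Sigma \<Sigma> R = {(a, b). a \<in> \<Sigma> \<and> b \<in> \<Sigma> \<and> (Some a, Some b) \<in> R}"

definition simple_regional :: "'a set \<Rightarrow> 'a option picture set \<Rightarrow> bool" where
  "simple_regional \<Sigma> \<theta> \<longleftrightarrow>
     acyclic (restrict_Sigma \<Sigma> (A_set \<theta>)) \<and> acyclic (restrict_Sigma \<Sigma> (A'_set \<theta>))"

end

theory Submission
  imports Defs
begin


definition Hg :: "(nat \<Rightarrow> nat \<Rightarrow> 'a) \<Rightarrow> nat \<Rightarrow> nat \<Rightarrow> ('a \<times> 'a) set" where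
  "Hg g m n = {(g i j, g i (Suc j)) | i j. i < m \<and> Suc j < n \<and> g i j \<noteq> g i (Suc j)}"
definition Vg :: "(nat \<Rightarrow> nat \<Rightarrow> 'a) \<Rightarrow> nat \<Rightarrow> nat \<Rightarrow> ('a \<times> 'a) set" where
  "Vg g m n = {(g i j, g (Suc i) j) | i j. Suc i < m \<and> j < n \<and> g i j \<noteq> g (Suc i) j}"
definition Adj :: "(nat \<Rightarrow> nat \<Rightarrow> 'a) \<Rightarrow> nat \<Rightarrow> nat \<Rightarrow> ('a \<times> 'a) set" where
  "Adj g m n = Hg g m n \<union> Vg g m n"
definition mir :: "nat \<Rightarrow> (nat \<Rightarrow> nat \<Rightarrow> 'a) \<Rightarrow> nat \<Rightarrow> nat \<Rightarrow> 'a" where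
  "mir n g = (\<lambda>i j. g i (n - 1 - j))"
definition conv :: "(nat \<Rightarrow> nat \<Rightarrow> 'a) \<Rightarrow> nat \<Rightarrow> nat \<Rightarrow> bool" where
  "conv g m n \<longleftrightarrow> (\<forall>i j i' j' k l. i < m \<longrightarrow> j < n \<longrightarrow> i' < m \<longrightarrow> j' < n \<longrightarrow> g i j = g i' j' \<longrightarrow>
     min i i' \<le> k \<longrightarrow> k \<le> max i i' \<longrightarrow> min j j' \<le> l \<longrightarrow> l \<le> max j j' \<longrightarrow> g k l = g i j)"

lemma convD: "conv g m n \<Longrightarrow> i < m \<Longrightarrow> j < n \<Longrightarrow> i' < m \<Longrightarrow> j' < n \<Longrightarrow> g i j = g i' j' \<Longrightarrow>
     min i i' \<le> k \<Longrightarrow> k \<le> max i i' \<Longrightarrow> min j j' \<le> l \<Longrightarrow> l \<le> max j j' \<Longrightarrow> g k l = g i j"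
  unfolding conv_def by blast

lemma Hg_mem: "i < m \<Longrightarrow> Suc j < n \<Longrightarrow> g i j \<noteq> g i (Suc j) \<Longrightarrow> (g i j, g i (Suc j)) \<in> Hg g m n"
  unfolding Hg_def by blast
lemma Vg_mem: "Suc i < m \<Longrightarrow> j < n \<Longrightarrow> g i j \<noteq> g (Suc i) j \<Longrightarrow> (g i j, g (Suc i) j) \<in> Vg g m n"
  unfolding Vg_def by blast

lemma Adj_mir: "Adj (mir n g) m n = (Hg g m n)\<inverse> \<union> Vg g m n"
proof -
  have H: "Hg (mir n g) m n = (Hg g m n)\<inverse>"
  proof (intro set_eqI iffI)
    fix x assume "x \<in> Hg (mir n g) m n"
    then obtain i j where x: "x = (g i (n - 1 - j), g i (n - 1 - Suc j))" "i < m" "Suc j < n"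
       "g i (n - 1 - j) \<noteq> g i (n - 1 - Suc j)"
      unfolding Hg_def mir_def by auto
    define k where "k = n - 1 - Suc j"
    have e: "n - 1 - j = Suc k" "Suc k < n" using x(3) by (auto simp: k_def)
    have x': "x = (g i (Suc k), g i k)" "g i k \<noteq> g i (Suc k)" using x(1,4) unfolding e(1) k_def[symmetric] by auto
    have "(g i k, g i (Suc k)) \<in> Hg g m n" using Hg_mem[of i m k n g] x(2) e(2) x'(2) by simp
    then show "x \<in> (Hg g m n)\<inverse>" using x' by simp
  next
    fix x assume "x \<in> (Hg g m n)\<inverse>"
    then obtain i j where x: "x = (g i (Suc j), g i j)" "i < m" "Suc j < n"
       "g i j \<noteq> g i (Suc j)"
      unfolding Hg_def by auto
    define k where "k = n - 2 - j"
    have e1: "n - 1 - k = Suc j" "n - 1 - Suc k = j" "Suc k < n" using x(3) by (auto simp: k_def)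
    have m1: "mir n g i k = g i (Suc j)" unfolding mir_def e1(1) ..
    have m2: "mir n g i (Suc k) = g i j" unfolding mir_def e1(2) ..
    have "(mir n g i k, mir n g i (Suc k)) \<in> Hg (mir n g) m n" 
      using Hg_mem[of i m k n "mir n g"] x(2) e1(3) x(4) unfolding m1 m2 by simp
    then show "x \<in> Hg (mir n g) m n" using x m1 m2 by simp
  qed
  have V: "Vg (mir n g) m n = Vg g m n"
  proof (intro set_eqI iffI)
    fix x assume "x \<in> Vg (mir n g) m n"
    then obtain i j where x: "x = (g i (n - 1 - j), g (Suc i) (n - 1 - j))" "Suc i < m" "j < n"
       "g i (n - 1 - j) \<noteq> g (Suc i) (n - 1 - j)"
      unfolding Vg_def mir_def by auto
    define k where "k = n - 1 - j"
    have "k < n" using x(3) by (simp add: k_def)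
    then show "x \<in> Vg g m n" unfolding Vg_def using x k_def by blast
  next
    fix x assume "x \<in> Vg g m n"
    then obtain i j where x: "x = (g i j, g (Suc i) j)" "Suc i < m" "j < n"
       "g i j \<noteq> g (Suc i) j"
      unfolding Vg_def by auto
    define k where "k = n - 1 - j"
    have e1: "n - 1 - k = j" "k < n" using x(3) by (auto simp: k_def)
    have m1: "mir n g i k = g i j" unfolding mir_def e1(1) ..
    have m2: "mir n g (Suc i) k = g (Suc i) j" unfolding mir_def e1(1) ..
    have "(mir n g i k, mir n g (Suc i) k) \<in> Vg (mir n g) m n" 
      using Vg_mem[of i m k n "mir n g"] x(2) e1(2) x(4) unfolding m1 m2 by simp
    then show "x \<in> Vg (mir n g) m n" using x m1 m2 by simp
  qed
  show ?thesis unfolding Adj_def H V ..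
qed

lemma reach_row:
  assumes "i < m" "j \<le> l" "l < n"
  shows "(g i j, g i l) \<in> (Adj g m n)\<^sup>*"
  using assms
proof (induction l)
  case 0 then show ?case by simp
next
  case (Suc l)
  show ?case
  proof (cases "j = Suc l")
    case True then show ?thesis by simp
  next
    case False
    then have IH: "(g i j, g i l) \<in> (Adj g m n)\<^sup>*" using Suc by simp
    show ?thesis
    proof (cases "g i l = g i (Suc l)")
      case True then show ?thesis using IH by simp
    next
      case False
      then have "(g i l, g i (Suc l)) \<in> Adj g m n"
        using Suc.prems unfolding Adj_def Hg_def by blast
      then show ?thesis using IH by (rule rtrancl_into_rtrancl[rotated])
    qed
  qed
qed

lemma reach_col:
  assumes "i \<le> k" "k < m" "l < n"
  shows "(g i l, g k l) \<in> (Adj g m n)\<^sup>*"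
  using assms
proof (induction k)
  case 0 then show ?case by simp
next
  case (Suc k)
  show ?case
  proof (cases "i = Suc k")
    case True then show ?thesis by simp
  next
    case False
    then have IH: "(g i l, g k l) \<in> (Adj g m n)\<^sup>*" using Suc by simp
    show ?thesis
    proof (cases "g k l = g (Suc k) l")
      case True then show ?thesis using IH by simp
    next
      case False
      then have "(g k l, g (Suc k) l) \<in> Adj g m n"
        using Suc.prems unfolding Adj_def Vg_def by blast
      then show ?thesis using IH by (rule rtrancl_into_rtrancl[rotated])
    qed
  qed
qed

lemma reach:
  assumes "i \<le> k" "k < m" "j \<le> l" "l < n"
  shows "(g i j, g k l) \<in> (Adj g m n)\<^sup>*"
  using reach_row[of i m j l n g] reach_col[of i k m l n g] assms by (meson le_less_trans rtrancl_trans)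

lemma acyc_half:
  assumes "acyclic (Adj g m n)" "i \<le> i'" "i' < m" "j \<le> j'" "j' < n" "g i j = g i' j'"
    "i \<le> k" "k \<le> i'" "j \<le> l" "l \<le> j'"
  shows "g k l = g i j"
proof (rule ccontr)
  assume ne: "g k l \<noteq> g i j"
  have r1: "(g i j, g k l) \<in> (Adj g m n)\<^sup>*" using assms by (intro reach) auto
  have r2: "(g k l, g i' j') \<in> (Adj g m n)\<^sup>*" using assms by (intro reach) auto
  from r1 ne have "(g i j, g k l) \<in> (Adj g m n)\<^sup>+" by (auto dest: rtranclD)
  with r2 assms(6) have "(g i j, g i j) \<in> (Adj g m n)\<^sup>+" by (metis trancl_rtrancl_trancl)
  with assms(1) show False unfolding acyclic_def by blast
qed

lemma acyc_half2:
  assumes "acyclic (Adj (mir n g) m n)" "i \<le> i'" "i' < m" "j' \<le> j" "j < n" "g i j = g i' j'"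
    "i \<le> k" "k \<le> i'" "j' \<le> l" "l \<le> j"
  shows "g k l = g i j"
proof -
  have "mir n g k (n - 1 - l) = mir n g i (n - 1 - j)"
    by (rule acyc_half[OF assms(1) assms(2) assms(3), of "n - 1 - j" "n - 1 - j'"])
       (use assms in \<open>auto simp: mir_def\<close>)
  then show ?thesis using assms by (simp add: mir_def)
qed

lemma acyc_conv:
  assumes a1: "acyclic (Adj g m n)" and a2: "acyclic (Adj (mir n g) m n)"
  shows "conv g m n"
proof -
  have key: "g k l = g i j" if "i \<le> i'" "i < m" "j < n" "i' < m" "j' < n" "g i j = g i' j'"
     "i \<le> k" "k \<le> i'" "min j j' \<le> l" "l \<le> max j j'" for i j i' j' k l
  proof (cases "j \<le> j'")
    case True then show ?thesis using acyc_half[OF a1, of i i' j j' k l] that by auto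
  next
    case False then show ?thesis using acyc_half2[OF a2, of i i' j' j k l] that by auto
  qed
  show ?thesis unfolding conv_def
  proof (intro allI impI)
    fix i j i' j' k l
    assume h: "i < m" "j < n" "i' < m" "j' < n" "g i j = g i' j'" "min i i' \<le> k" "k \<le> max i i'"
      "min j j' \<le> l" "l \<le> max j j'"
    show "g k l = g i j"
    proof (cases "i \<le> i'")
      case True then show ?thesis using key[of i i' j j' k l] h by auto
    next
      case False then show ?thesis using key[of i' i j' j k l] h by (auto simp: min.commute max.commute)
    qed
  qed
qed

lemma conv_mir: assumes "conv g m n" shows "conv (mir n g) m n"
  unfolding conv_def mir_def
proof (intro allI impI)
  fix i j i' j' k l
  assume h: "i < m" "j < n" "i' < m" "j' < n" "g i (n - 1 - j) = g i' (n - 1 - j')" "min i i' \<le> k" "k \<le> max i i'"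
      "min j j' \<le> l" "l \<le> max j j'"
  have c: "min (n - 1 - j) (n - 1 - j') \<le> n - 1 - l" "n - 1 - l \<le> max (n - 1 - j) (n - 1 - j')"
    using h(2,4,8,9) by (auto simp: min_def max_def split: if_splits)
  show "g k (n - 1 - l) = g i (n - 1 - j)"
    by (rule convD[OF assms, of i "n - 1 - j" i' "n - 1 - j'"]) (use h c in auto)
qed



lemma box_of_conv:
  assumes c: "conv g m n" and ij: "i < m" "j < n"
  shows "\<exists>x x' y y'. x \<le> x' \<and> x' < m \<and> y \<le> y' \<and> y' < n \<and>
     (\<forall>k l. k < m \<longrightarrow> l < n \<longrightarrow> (g k l = g i j \<longleftrightarrow> x \<le> k \<and> k \<le> x' \<and> y \<le> l \<and> l \<le> y'))"
proof -
  define S where "S = {(k,l). k < m \<and> l < n \<and> g k l = g i j}"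
  have fin: "finite S" unfolding S_def by (rule finite_subset[of _ "{..<m} \<times> {..<n}"]) auto
  have ne: "(i,j) \<in> S" using ij by (simp add: S_def)
  define x where "x = Min (fst ` S)"
  define x' where "x' = Max (fst ` S)"
  define y where "y = Min (snd ` S)"
  define y' where "y' = Max (snd ` S)"
  have fin1: "finite (fst ` S)" "finite (snd ` S)" using fin by auto
  have ne1: "fst ` S \<noteq> {}" "snd ` S \<noteq> {}" using ne by auto
  have "x \<in> fst ` S" unfolding x_def using Min_in fin1 ne1 by blast
  then obtain c1 where c1: "(x, c1) \<in> S" by force
  have "x' \<in> fst ` S" unfolding x'_def using Max_in fin1 ne1 by blast
  then obtain c2 where c2: "(x', c2) \<in> S" by force
  have "y \<in> snd ` S" unfolding y_def using Min_in fin1 ne1 by blast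
  then obtain r1 where r1: "(r1, y) \<in> S" by force
  have "y' \<in> snd ` S" unfolding y'_def using Max_in fin1 ne1 by blast
  then obtain r2 where r2: "(r2, y') \<in> S" by force
  have bnd: "x \<le> k \<and> k \<le> x' \<and> y \<le> l \<and> l \<le> y'" if "(k,l) \<in> S" for k l
  proof -
    have "k \<in> fst ` S" "l \<in> snd ` S" using that by force+
    then show ?thesis using fin1 unfolding x_def x'_def y_def y'_def by auto
  qed
  have Sd: "k < m \<and> l < n \<and> g k l = g i j" if "(k,l) \<in> S" for k l
    using that unfolding S_def by auto
  have inS: "g k l = g i j" if h: "x \<le> k" "k \<le> x'" "y \<le> l" "l \<le> y'" for k l
  proof -
    note s1 = Sd[OF c1] and s2 = Sd[OF c2] and s3 = Sd[OF r1] and s4 = Sd[OF r2]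
    have km: "k < m" using h s2 by linarith
    have ln: "l < n" using h s4 by linarith
    have e1: "g k c1 = g x c1"
      by (rule convD[OF c, of x c1 x' c2]) (use s1 s2 h in \<open>auto simp: min_def max_def\<close>)
    have e2: "g r1 l = g r1 y"
      by (rule convD[OF c, of r1 y r2 y']) (use s3 s4 h in \<open>auto simp: min_def max_def\<close>)
    have "g k l = g k c1"
      by (rule convD[OF c, of k c1 r1 l]) (use s1 s3 e1 e2 h km ln in \<open>auto simp: min_def max_def\<close>)
    then show ?thesis using e1 s1 by simp
  qed
  show ?thesis
  proof (intro exI conjI allI impI)
    show "x \<le> x'" using bnd[OF c2] by simp
    show "x' < m" using Sd[OF c2] by simp
    show "y \<le> y'" using bnd[OF r2] by simp
    show "y' < n" using Sd[OF r2] by simp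
    fix k l assume kl: "k < m" "l < n"
    show "g k l = g i j \<longleftrightarrow> x \<le> k \<and> k \<le> x' \<and> y \<le> l \<and> l \<le> y'"
    proof
      assume "g k l = g i j" then have "(k,l) \<in> S" using kl by (simp add: S_def)
      then show "x \<le> k \<and> k \<le> x' \<and> y \<le> l \<and> l \<le> y'" by (rule bnd)
    next
      assume "x \<le> k \<and> k \<le> x' \<and> y \<le> l \<and> l \<le> y'" then show "g k l = g i j" using inS by blast
    qed
  qed
qed

definition nwc :: "(nat \<Rightarrow> nat \<Rightarrow> 'a) \<Rightarrow> nat \<Rightarrow> nat \<Rightarrow> 'a set \<Rightarrow> bool" where
  "nwc g m n S \<longleftrightarrow> (\<forall>i j i' j'. i < m \<longrightarrow> j < n \<longrightarrow> g i j \<in> S \<longrightarrow> i' \<le> i \<longrightarrow> j' \<le> j \<longrightarrow> g i' j' \<in> S)"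

lemma nwcD: "nwc g m n S \<Longrightarrow> i < m \<Longrightarrow> j < n \<Longrightarrow> g i j \<in> S \<Longrightarrow> i' \<le> i \<Longrightarrow> j' \<le> j \<Longrightarrow> g i' j' \<in> S"
  unfolding nwc_def by blast



lemma extend:
  fixes g :: "nat \<Rightarrow> nat \<Rightarrow> 'a" and X X' Y Y' :: "'a \<Rightarrow> nat"
  assumes box: "\<And>i j. i < m \<Longrightarrow> j < n \<Longrightarrow> X (g i j) \<le> X' (g i j) \<and> X' (g i j) < m \<and> Y (g i j) \<le> Y' (g i j) \<and> Y' (g i j) < n \<and>
      (\<forall>k l. k < m \<longrightarrow> l < n \<longrightarrow> (g k l = g i j \<longleftrightarrow> X (g i j) \<le> k \<and> k \<le> X' (g i j) \<and> Y (g i j) \<le> l \<and> l \<le> Y' (g i j)))"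
    and nw: "nwc g m n S"
    and ex: "i0 < m" "j0 < n" "g i0 j0 \<notin> S"
  shows "\<exists>i j. i < m \<and> j < n \<and> g i j \<notin> S \<and> nwc g m n (insert (g i j) S)"
proof -
  have boxI: "g k l = g i j" if "i < m" "j < n" "k < m" "l < n" "X (g i j) \<le> k" "k \<le> X' (g i j)"
    "Y (g i j) \<le> l" "l \<le> Y' (g i j)" for i j k l using box that by blast
  have boxD: "X (g i j) \<le> k \<and> k \<le> X' (g i j) \<and> Y (g i j) \<le> l \<and> l \<le> Y' (g i j)"
    if "i < m" "j < n" "k < m" "l < n" "g k l = g i j" for i j k l using box that by blast
  have bnds: "X (g i j) \<le> X' (g i j) \<and> X' (g i j) < m \<and> Y (g i j) \<le> Y' (g i j) \<and> Y' (g i j) < n"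
    if "i < m" "j < n" for i j using box that by blast
  define K where "K = {(i,j). i < m \<and> j < n \<and> g i j \<notin> S \<and> (0 < Y (g i j) \<longrightarrow>
     (\<forall>k. X (g i j) \<le> k \<longrightarrow> k \<le> X' (g i j) \<longrightarrow> g k (Y (g i j) - 1) \<in> S))}"
  have finK: "finite K" unfolding K_def by (rule finite_subset[of _ "{..<m} \<times> {..<n}"]) auto
  define Z where "Z = {j. \<exists>i<m. j < n \<and> g i j \<notin> S}"
  have finZ: "finite Z" unfolding Z_def by (rule finite_subset[of _ "{..<n}"]) auto
  have "j0 \<in> Z" using ex by (auto simp: Z_def)
  then have "Min Z \<in> Z" using finZ Min_in by blast
  then obtain i1 where i1: "i1 < m" "Min Z < n" "g i1 (Min Z) \<notin> S" by (auto simp: Z_def)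
  have c0min: "Min Z \<le> j" if "i < m" "j < n" "g i j \<notin> S" for i j
  proof -
    have "j \<in> Z" using that by (auto simp: Z_def)
    then show ?thesis using finZ by simp
  qed
  have "(i1, Min Z) \<in> K"
  proof -
    let ?b = "g i1 (Min Z)"
    have yb: "Y ?b \<le> Min Z" using boxD[OF i1(1,2) i1(1,2)] by simp
    have "g k (Y ?b - 1) \<in> S" if "0 < Y ?b" "X ?b \<le> k" "k \<le> X' ?b" for k
    proof (rule ccontr)
      assume "g k (Y ?b - 1) \<notin> S"
      moreover have "k < m" "Y ?b - 1 < n" using that bnds[OF i1(1,2)] by auto
      ultimately have "Min Z \<le> Y ?b - 1" using c0min by blast
      then show False using yb that(1) by linarith
    qed
    then show ?thesis unfolding K_def using i1 by auto
  qed
  then have Kne: "K \<noteq> {}" by blast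
  define fY where "fY c = Y (g (fst c) (snd c))" for c
  define fX where "fX c = X (g (fst c) (snd c))" for c
  define K2 where "K2 = {c \<in> K. fY c = Max (fY ` K)}"
  have "Max (fY ` K) \<in> fY ` K" using finK Kne by auto
  then have K2ne: "K2 \<noteq> {}" unfolding K2_def by force
  have finK2: "finite K2" using finK unfolding K2_def by auto
  have "Min (fX ` K2) \<in> fX ` K2" using finK2 K2ne by auto
  then obtain i j where ij: "(i,j) \<in> K2" "fX (i,j) = Min (fX ` K2)" by force
  have ymax: "fY c \<le> fY (i,j)" if "c \<in> K" for c
    using ij(1) that finK unfolding K2_def by auto
  have xmin: "fX (i,j) \<le> fX c" if "c \<in> K" "fY c = fY (i,j)" for c
  proof -
    have "c \<in> K2" using that ij(1) unfolding K2_def by auto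
    then show ?thesis using ij(2) finK2 by simp
  qed
  have ijK: "i < m" "j < n" "g i j \<notin> S"
     "\<And>k. 0 < Y (g i j) \<Longrightarrow> X (g i j) \<le> k \<Longrightarrow> k \<le> X' (g i j) \<Longrightarrow> g k (Y (g i j) - 1) \<in> S"
    using ij(1) unfolding K2_def K_def by auto
  define b where "b = g i j"
  have bb: "X b \<le> X' b" "X' b < m" "Y b \<le> Y' b" "Y' b < n" using bnds[OF ijK(1,2)] by (auto simp: b_def)
  have left: "g k (Y b - 1) \<in> S" if "0 < Y b" "X b \<le> k" "k \<le> X' b" for k
    using ijK(4) that unfolding b_def by blast
  have top: "g (X b - 1) l \<in> S" if "Y b \<le> l" "l \<le> Y' b" "0 < X b" for l
  proof (rule ccontr)
    assume l1: "g (X b - 1) l \<notin> S"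
    define T where "T = {l. Y b \<le> l \<and> l \<le> Y' b \<and> g (X b - 1) l \<notin> S}"
    have finT: "finite T" unfolding T_def by (rule finite_subset[of _ "{..Y' b}"]) auto
    have "l \<in> T" using that l1 by (simp add: T_def)
    then have "Min T \<in> T" using finT Min_in by blast
    define l0 where "l0 = Min T"
    have l0T: "Y b \<le> l0" "l0 \<le> Y' b" "g (X b - 1) l0 \<notin> S" using \<open>Min T \<in> T\<close> by (auto simp: T_def l0_def)
    have l0min: "l0 \<le> l'" if "l' \<in> T" for l' using that finT by (simp add: l0_def)
    define d where "d = g (X b - 1) l0"
    have xb1: "X b - 1 < m" using bb by linarith
    have l0n: "l0 < n" using l0T bb by linarith
    have dS: "d \<notin> S" using l0T by (simp add: d_def)
    have dself: "X d \<le> X b - 1" "X b - 1 \<le> X' d" "Y d \<le> l0" "l0 \<le> Y' d"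
      using boxD[OF xb1 l0n xb1 l0n] by (auto simp: d_def)
    have dbnds: "X d \<le> X' d" "X' d < m" "Y d \<le> Y' d" "Y' d < n" using bnds[OF xb1 l0n] by (auto simp: d_def)
    have A: "g (X b - 1) (l0 - 1) \<in> S" if "0 < l0"
    proof (cases "Y b \<le> l0 - 1")
      case True
      show ?thesis
      proof (rule ccontr)
        assume "g (X b - 1) (l0 - 1) \<notin> S"
        then have "l0 - 1 \<in> T" using True l0T by (simp add: T_def)
        then show False using l0min that by fastforce
      qed
    next
      case False
      then have e: "l0 = Y b" "0 < Y b" using l0T that by auto
      have "g (X b) (Y b - 1) \<in> S" using left[OF e(2)] bb by simp
      moreover have "Y b - 1 < n" using bb by linarith
      ultimately show ?thesis using nwcD[OF nw bb(2)[THEN le_less_trans[OF bb(1)]]] e by simp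
    qed
    have Yd: "Y d = l0"
    proof (rule ccontr)
      assume "Y d \<noteq> l0"
      then have lt: "Y d < l0" using dself by simp
      have "g (X b - 1) (l0 - 1) = g (X b - 1) l0"
        by (rule boxI[OF xb1 l0n xb1]) (use lt dself l0n in \<open>auto simp: d_def\<close>)
      then show False using A lt dS by (simp add: d_def)
    qed
    have Xd: "X' d < X b"
    proof (rule ccontr)
      assume "\<not> X' d < X b"
      then have h1: "X b \<le> X' d" by simp
      have xbm: "X b < m" using bb by linarith
      have "g (X b) l0 = d"
        unfolding d_def by (rule boxI[OF xb1 l0n xbm l0n]) (use h1 dself Yd in \<open>auto simp: d_def\<close>)
      moreover have "g (X b) l0 = b"
        using boxI[OF ijK(1,2) xbm l0n] bb l0T by (simp add: b_def)
      ultimately have "g (X b - 1) l0 = g i j" by (simp add: d_def b_def)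
      then have "X b \<le> X b - 1" using boxD[OF ijK(1,2) xb1 l0n] by (simp add: b_def)
      then show False using that(3) by linarith
    qed
    have dK: "(X b - 1, l0) \<in> K"
    proof -
      have "g k (Y d - 1) \<in> S" if "0 < Y d" "X d \<le> k" "k \<le> X' d" for k
      proof -
        have "g (X b - 1) (l0 - 1) \<in> S" using A that(1) Yd by simp
        moreover have "l0 - 1 < n" using l0n by linarith
        ultimately show ?thesis using nwcD[OF nw xb1, of "l0 - 1" k "l0 - 1"] that Xd Yd by simp
      qed
      then show ?thesis unfolding K_def using xb1 l0n dS by (simp add: d_def)
    qed
    have "fY (X b - 1, l0) \<le> fY (i,j)" by (rule ymax[OF dK])
    then have "l0 \<le> Y b" using Yd by (simp add: fY_def d_def b_def)
    then have "fY (X b - 1, l0) = fY (i,j)" using Yd l0T by (simp add: fY_def d_def b_def)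
    then have "fX (i,j) \<le> fX (X b - 1, l0)" by (rule xmin[OF dK])
    then have "X b \<le> X d" by (simp add: fX_def d_def b_def)
    then show False using Xd dbnds by linarith
  qed
  have "nwc g m n (insert b S)"
    unfolding nwc_def
  proof (intro allI impI)
    fix i2 j2 i' j' assume h: "i2 < m" "j2 < n" "g i2 j2 \<in> insert b S" "i' \<le> i2" "j' \<le> j2"
    show "g i' j' \<in> insert b S"
    proof (cases "g i2 j2 \<in> S")
      case True then show ?thesis using nwcD[OF nw h(1,2) True h(4,5)] by simp
    next
      case False
      then have "g i2 j2 = g i j" using h(3) by (simp add: b_def)
      then have in2: "X b \<le> i2" "i2 \<le> X' b" "Y b \<le> j2" "j2 \<le> Y' b"
        using boxD[OF ijK(1,2) h(1,2)] by (auto simp: b_def)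
      have i'm: "i' < m" "j' < n" using h by linarith+
      consider (c1) "X b \<le> i'" "Y b \<le> j'" | (c2) "j' < Y b" | (c3) "i' < X b" "Y b \<le> j'" by linarith
      then show ?thesis
      proof cases
        case c1
        have "g i' j' = g i j" by (rule boxI[OF ijK(1,2) i'm]) (use c1 in2 h in \<open>auto simp: b_def\<close>)
        then show ?thesis by (simp add: b_def)
      next
        case c2
        define r where "r = max i' (X b)"
        have r: "X b \<le> r" "r \<le> X' b" "i' \<le> r" using in2 h by (auto simp: r_def)
        have "g r (Y b - 1) \<in> S" using left[OF _ r(1,2)] c2 by simp
        moreover have "r < m" "Y b - 1 < n" using r bb by linarith+
        ultimately have "g i' j' \<in> S" using nwcD[OF nw, of r "Y b - 1" i' j'] r c2 by simp
        then show ?thesis by simp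
      next
        case c3
        have "g (X b - 1) j' \<in> S" using top[OF c3(2)] in2 h c3 by simp
        moreover have "X b - 1 < m" using bb by linarith
        ultimately have "g i' j' \<in> S" using nwcD[OF nw, of "X b - 1" j' i' j'] i'm c3 by simp
        then show ?thesis by simp
      qed
    qed
  qed
  then show ?thesis using ijK b_def by blast
qed



lemma conv_acyc:
  fixes g :: "nat \<Rightarrow> nat \<Rightarrow> 'a"
  assumes c: "conv g m n" shows "acyclic (Adj g m n)"
proof -
  define P where "P a q \<longleftrightarrow> (case q of (x, x', y, y') \<Rightarrow> x \<le> x' \<and> x' < m \<and> y \<le> y' \<and> y' < n \<and>
     (\<forall>k l. k < m \<longrightarrow> l < n \<longrightarrow> (g k l = a \<longleftrightarrow> x \<le> k \<and> k \<le> x' \<and> y \<le> l \<and> l \<le> y')))" for a and q :: "nat \<times> nat \<times> nat \<times> nat"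
  define Q where "Q a = (SOME q. P a q)" for a
  define X where "X a = fst (Q a)" for a
  define X' where "X' a = fst (snd (Q a))" for a
  define Y where "Y a = fst (snd (snd (Q a)))" for a
  define Y' where "Y' a = snd (snd (snd (Q a)))" for a
  have box: "X (g i j) \<le> X' (g i j) \<and> X' (g i j) < m \<and> Y (g i j) \<le> Y' (g i j) \<and> Y' (g i j) < n \<and>
      (\<forall>k l. k < m \<longrightarrow> l < n \<longrightarrow> (g k l = g i j \<longleftrightarrow> X (g i j) \<le> k \<and> k \<le> X' (g i j) \<and> Y (g i j) \<le> l \<and> l \<le> Y' (g i j)))"
    if ij: "i < m" "j < n" for i j
  proof -
    obtain x x' y y' where "x \<le> x' \<and> x' < m \<and> y \<le> y' \<and> y' < n \<and>
     (\<forall>k l. k < m \<longrightarrow> l < n \<longrightarrow> (g k l = g i j \<longleftrightarrow> x \<le> k \<and> k \<le> x' \<and> y \<le> l \<and> l \<le> y'))"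
      using box_of_conv[OF c ij] by blast
    then have "P (g i j) (x, x', y, y')" unfolding P_def by simp
    then have "P (g i j) (Q (g i j))" unfolding Q_def by (rule someI)
    moreover have "Q (g i j) = (X (g i j), X' (g i j), Y (g i j), Y' (g i j))"
      unfolding X_def X'_def Y_def Y'_def by simp
    ultimately show ?thesis unfolding P_def by simp
  qed
  define R where "R = Adj g m n"
  show ?thesis
  proof (rule ccontr)
    assume "\<not> acyclic (Adj g m n)"
    then obtain a where a: "(a,a) \<in> R\<^sup>+" unfolding acyclic_def R_def by blast
    define C where "C = {b. (b,b) \<in> R\<^sup>+}"
    have pred: "\<exists>c\<in>C. (c,b) \<in> R" if "b \<in> C" for b
    proof -
      from that have "(b,b) \<in> R\<^sup>+" by (simp add: C_def)
      then obtain c where "(b,c) \<in> R\<^sup>*" "(c,b) \<in> R" by (meson tranclD2)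
      then have "(c,c) \<in> R\<^sup>+" by (meson rtrancl_into_trancl2)
      then show ?thesis using \<open>(c,b) \<in> R\<close> by (auto simp: C_def)
    qed
    define V where "V = {g i j | i j. i < m \<and> j < n}"
    have RV: "b \<in> V" if "(c,b) \<in> R" for c b
      using that unfolding R_def Adj_def Hg_def Vg_def V_def by (auto simp del: less_Suc_eq)
    have CV: "C \<subseteq> V"
    proof
      fix b assume "b \<in> C" then obtain c where "(c,b) \<in> R" using pred by blast
      then show "b \<in> V" by (rule RV)
    qed
    have finV: "finite V"
    proof -
      have "V \<subseteq> (\<lambda>p. g (fst p) (snd p)) ` ({..<m} \<times> {..<n})" unfolding V_def by force
      then show ?thesis by (rule finite_subset) auto
    qed
    define F where "F = {S. S \<subseteq> V \<and> S \<inter> C = {} \<and> nwc g m n S}"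
    have finF: "finite F"
    proof (rule finite_subset)
      show "F \<subseteq> Pow V" unfolding F_def by auto
      show "finite (Pow V)" using finV by simp
    qed
    have "{} \<in> F" unfolding F_def nwc_def by simp
    then obtain S where S: "S \<in> F" "\<forall>S'\<in>F. S \<subseteq> S' \<longrightarrow> S = S'"
      using finite_has_maximal[OF finF] by blast
    have SF: "S \<subseteq> V" "S \<inter> C = {}" "nwc g m n S" using S(1) by (auto simp: F_def)
    have "a \<in> C" using a by (simp add: C_def)
    then have "a \<in> V" "a \<notin> S" using CV SF by auto
    then obtain i0 j0 where ij0: "i0 < m" "j0 < n" "g i0 j0 \<notin> S" unfolding V_def by auto
    obtain i j where ij: "i < m" "j < n" "g i j \<notin> S" "nwc g m n (insert (g i j) S)"
      using extend[OF box SF(3) ij0] by blast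
    have bV: "g i j \<in> V" using ij unfolding V_def by blast
    have bC: "g i j \<in> C"
    proof (rule ccontr)
      assume "g i j \<notin> C"
      then have "insert (g i j) S \<in> F" using bV SF ij(4) unfolding F_def by auto
      then have "S = insert (g i j) S" using S(2) by blast
      then show False using ij(3) by blast
    qed
    obtain c where c: "c \<in> C" "(c, g i j) \<in> R" using pred[OF bC] by blast
    have "c \<in> insert (g i j) S \<and> c \<noteq> g i j"
    proof -
      from c(2) have "(c, g i j) \<in> Hg g m n \<or> (c, g i j) \<in> Vg g m n" unfolding R_def Adj_def by blast
      then show ?thesis
      proof
        assume "(c, g i j) \<in> Hg g m n"
        then obtain i1 j1 where h: "c = g i1 j1" "g i j = g i1 (Suc j1)" "i1 < m" "Suc j1 < n" "c \<noteq> g i j"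
          unfolding Hg_def by auto
        have "g i1 (Suc j1) \<in> insert (g i j) S" using h by simp
        then have "g i1 j1 \<in> insert (g i j) S" using nwcD[OF ij(4) h(3,4)] by simp
        then show ?thesis using h by simp
      next
        assume "(c, g i j) \<in> Vg g m n"
        then obtain i1 j1 where h: "c = g i1 j1" "g i j = g (Suc i1) j1" "Suc i1 < m" "j1 < n" "c \<noteq> g i j"
          unfolding Vg_def by auto
        have "g (Suc i1) j1 \<in> insert (g i j) S" using h by simp
        then have "g i1 j1 \<in> insert (g i j) S" using nwcD[OF ij(4) h(3,4)] by simp
        then show ?thesis using h by simp
      qed
    qed
    then have "c \<in> S" by blast
    then show False using c(1) SF(2) by blast
  qed
qed


lemma pic_facts:
  assumes "p \<in> pictures \<Sigma>"
  shows "0 < nrows p" "0 < ncols p" "\<And>i. i < nrows p \<Longrightarrow> length (p ! i) = ncols p"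
    "\<And>i j. i < nrows p \<Longrightarrow> j < ncols p \<Longrightarrow> pix p i j \<in> \<Sigma>"
proof -
  have ip: "is_picture p" and a4: "\<forall>r\<in>set p. set r \<subseteq> \<Sigma>"
    using assms unfolding pictures_def by simp_all
  have a1: "p \<noteq> []" and a2: "hd p \<noteq> []" and a3: "\<forall>r\<in>set p. length r = length (hd p)"
    using ip unfolding is_picture_def by blast+
  show "0 < nrows p" using a1 unfolding nrows_def by simp
  show "0 < ncols p" using a2 unfolding ncols_def by simp
  show l: "length (p ! i) = ncols p" if "i < nrows p" for i
  proof -
    have "p ! i \<in> set p" using that unfolding nrows_def by (rule nth_mem)
    then show ?thesis using a3 unfolding ncols_def by blast
  qed
  show "pix p i j \<in> \<Sigma>" if "i < nrows p" "j < ncols p" for i j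
  proof -
    have r: "p ! i \<in> set p" using that(1) unfolding nrows_def by (rule nth_mem)
    have "j < length (p ! i)" using l[OF that(1)] that(2) by simp
    then have "p ! i ! j \<in> set (p ! i)" by (rule nth_mem)
    then show ?thesis using a4 r unfolding pix_def by blast
  qed
qed
lemma frame_dims:
  assumes "p \<in> pictures \<Sigma>"
  shows "nrows (frame p) = nrows p + 2" "ncols (frame p) = ncols p + 2"
  unfolding frame_def nrows_def ncols_def by simp_all

lemma pix_frame:
  assumes p: "p \<in> pictures \<Sigma>" and ij: "i < nrows p + 2" "j < ncols p + 2"
  shows "pix (frame p) i j = (if 0 < i \<and> i \<le> nrows p \<and> 0 < j \<and> j \<le> ncols p then Some (pix p (i - 1) (j - 1)) else None)"
proof (cases i)
  case 0 then show ?thesis using ij unfolding frame_def pix_def by (simp add: nth_Cons' nth_replicate)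
next
  case (Suc i')
  show ?thesis
  proof (cases "i' < nrows p")
    case True
    have len: "length (p ! i') = ncols p" using pic_facts(3)[OF p True] .
    have row: "frame p ! i = [None] @ map Some (p ! i') @ [None]"
      using True Suc unfolding frame_def nrows_def by (simp add: nth_append)
    show ?thesis
    proof (cases j)
      case 0 then show ?thesis using row by (simp add: pix_def)
    next
      case (Suc j')
      then show ?thesis using row len ij True \<open>i = Suc i'\<close>
        by (auto simp: pix_def nth_append)
    qed
  next
    case False
    then have "i' = nrows p" using ij Suc by simp
    then have "frame p ! i = replicate (ncols p + 2) None"
      using Suc unfolding frame_def nrows_def by (simp add: nth_append)
    then show ?thesis using ij \<open>i' = nrows p\<close> Suc by (simp add: pix_def nth_Cons' nth_replicate)
  qed
qed

lemma Fsome: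
  assumes p: "p \<in> pictures \<Sigma>" and ij: "i < nrows p + 2" "j < ncols p + 2"
    and s: "pix (frame p) i j = Some a"
  shows "0 < i \<and> i \<le> nrows p \<and> 0 < j \<and> j \<le> ncols p \<and> a = pix p (i - 1) (j - 1)"
  using pix_frame[OF p ij] s by (simp split: if_splits)

lemma Finner:
  assumes p: "p \<in> pictures \<Sigma>" and ij: "i < nrows p" "j < ncols p"
  shows "pix (frame p) (Suc i) (Suc j) = Some (pix p i j)"
  using pix_frame[OF p, of "Suc i" "Suc j"] ij by simp

lemma subtiles_frame:
  assumes p: "p \<in> pictures \<Sigma>"
  shows "t \<in> subtiles (frame p) \<longleftrightarrow> (\<exists>i j. i < nrows p + 1 \<and> j < ncols p + 1 \<and>
     t = [[pix (frame p) i j, pix (frame p) i (Suc j)], [pix (frame p) (Suc i) j, pix (frame p) (Suc i) (Suc j)]])"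
  unfolding subtiles_def frame_dims[OF p] by auto

lemma two_cases: "(i::nat) < 2 \<longleftrightarrow> i = 0 \<or> i = 1" by arith

lemma H_tile: "H_rel [[w,x],[y,z]] = {(u,v). (u = w \<and> v = x \<or> u = y \<and> v = z) \<and> u \<noteq> v}"
  unfolding H_rel_def pix_def two_cases
  apply auto
   apply (rule exI[of _ 0]; simp)
  apply (rule exI[of _ "Suc 0"]; simp)
  done

lemma V_tile: "V_rel [[w,x],[y,z]] = {(u,v). (u = w \<and> v = y \<or> u = x \<and> v = z) \<and> u \<noteq> v}"
  unfolding V_rel_def pix_def two_cases
  apply auto
   apply (rule exI[of _ 0]; simp)
  apply (rule exI[of _ "Suc 0"]; simp)
  done



lemma HF:
  assumes p: "p \<in> pictures \<Sigma>" and r: "r < nrows p + 2" "Suc j < ncols p + 2"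
    and s: "pix (frame p) r j = Some a" "pix (frame p) r (Suc j) = Some b" "a \<noteq> b"
  shows "(a,b) \<in> Hg (pix p) (nrows p) (ncols p)"
proof -
  have f1: "0 < r \<and> r \<le> nrows p \<and> 0 < j \<and> j \<le> ncols p \<and> a = pix p (r - 1) (j - 1)"
    using Fsome[OF p r(1) _ s(1)] r(2) by simp
  have f2: "0 < r \<and> r \<le> nrows p \<and> Suc j \<le> ncols p \<and> b = pix p (r - 1) j"
    using Fsome[OF p r s(2)] by simp
  have "(pix p (r - 1) (j - 1), pix p (r - 1) (Suc (j - 1))) \<in> Hg (pix p) (nrows p) (ncols p)"
    by (rule Hg_mem) (use f1 f2 s(3) in auto)
  then show ?thesis using f1 f2 by simp
qed

lemma VF:
  assumes p: "p \<in> pictures \<Sigma>" and r: "Suc r < nrows p + 2" "j < ncols p + 2"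
    and s: "pix (frame p) r j = Some a" "pix (frame p) (Suc r) j = Some b" "a \<noteq> b"
  shows "(a,b) \<in> Vg (pix p) (nrows p) (ncols p)"
proof -
  have f1: "0 < r \<and> r \<le> nrows p \<and> 0 < j \<and> j \<le> ncols p \<and> a = pix p (r - 1) (j - 1)"
    using Fsome[OF p _ r(2) s(1)] r(1) by simp
  have f2: "Suc r \<le> nrows p \<and> 0 < j \<and> j \<le> ncols p \<and> b = pix p r (j - 1)"
    using Fsome[OF p r s(2)] by simp
  have "(pix p (r - 1) (j - 1), pix p (Suc (r - 1)) (j - 1)) \<in> Vg (pix p) (nrows p) (ncols p)"
    by (rule Vg_mem) (use f1 f2 s(3) in auto)
  then show ?thesis using f1 f2 by simp
qed

lemma PH:
  assumes p: "p \<in> pictures \<Sigma>"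
  shows "(\<exists>t\<in>subtiles (frame p). (Some a, Some b) \<in> H_rel t) \<longleftrightarrow> (a,b) \<in> Hg (pix p) (nrows p) (ncols p)"
proof
  assume "\<exists>t\<in>subtiles (frame p). (Some a, Some b) \<in> H_rel t"
  then obtain t where t: "t \<in> subtiles (frame p)" "(Some a, Some b) \<in> H_rel t" by blast
  from t(1) obtain i j where ij: "i < nrows p + 1" "j < ncols p + 1"
    and te: "t = [[pix (frame p) i j, pix (frame p) i (Suc j)], [pix (frame p) (Suc i) j, pix (frame p) (Suc i) (Suc j)]]"
    unfolding subtiles_frame[OF p] by blast
  have h: "(Some a, Some b) \<in> H_rel [[pix (frame p) i j, pix (frame p) i (Suc j)], [pix (frame p) (Suc i) j, pix (frame p) (Suc i) (Suc j)]]"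
    using t(2) te by simp
  from h consider "pix (frame p) i j = Some a" "pix (frame p) i (Suc j) = Some b" "a \<noteq> b"
    | "pix (frame p) (Suc i) j = Some a" "pix (frame p) (Suc i) (Suc j) = Some b" "a \<noteq> b"
    unfolding H_tile by auto
  then show "(a,b) \<in> Hg (pix p) (nrows p) (ncols p)"
  proof cases
    case 1 then show ?thesis using HF[OF p, of i j a b] ij by simp
  next
    case 2 then show ?thesis using HF[OF p, of "Suc i" j a b] ij by simp
  qed
next
  assume "(a,b) \<in> Hg (pix p) (nrows p) (ncols p)"
  then obtain i j where h: "a = pix p i j" "b = pix p i (Suc j)" "i < nrows p" "Suc j < ncols p" "a \<noteq> b"
    unfolding Hg_def by auto
  let ?t = "[[pix (frame p) (Suc i) (Suc j), pix (frame p) (Suc i) (Suc (Suc j))],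
             [pix (frame p) (Suc (Suc i)) (Suc j), pix (frame p) (Suc (Suc i)) (Suc (Suc j))]]"
  have "?t \<in> subtiles (frame p)" unfolding subtiles_frame[OF p]
    by (rule exI[of _ "Suc i"], rule exI[of _ "Suc j"]) (use h in simp)
  moreover have "pix (frame p) (Suc i) (Suc j) = Some a" 
    unfolding h(1) by (rule Finner[OF p]) (use h in simp_all)
  moreover have "pix (frame p) (Suc i) (Suc (Suc j)) = Some b"
    unfolding h(2) by (rule Finner[OF p]) (use h in simp_all)
  ultimately have "?t \<in> subtiles (frame p)" "(Some a, Some b) \<in> H_rel ?t"
    using h(5) unfolding H_tile by simp_all
  then show "\<exists>t\<in>subtiles (frame p). (Some a, Some b) \<in> H_rel t" by blast
qed

lemma PV:
  assumes p: "p \<in> pictures \<Sigma>"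
  shows "(\<exists>t\<in>subtiles (frame p). (Some a, Some b) \<in> V_rel t) \<longleftrightarrow> (a,b) \<in> Vg (pix p) (nrows p) (ncols p)"
proof
  assume "\<exists>t\<in>subtiles (frame p). (Some a, Some b) \<in> V_rel t"
  then obtain t where t: "t \<in> subtiles (frame p)" "(Some a, Some b) \<in> V_rel t" by blast
  from t(1) obtain i j where ij: "i < nrows p + 1" "j < ncols p + 1"
    and te: "t = [[pix (frame p) i j, pix (frame p) i (Suc j)], [pix (frame p) (Suc i) j, pix (frame p) (Suc i) (Suc j)]]"
    unfolding subtiles_frame[OF p] by blast
  have h: "(Some a, Some b) \<in> V_rel [[pix (frame p) i j, pix (frame p) i (Suc j)], [pix (frame p) (Suc i) j, pix (frame p) (Suc i) (Suc j)]]"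
    using t(2) te by simp
  from h consider "pix (frame p) i j = Some a" "pix (frame p) (Suc i) j = Some b" "a \<noteq> b"
    | "pix (frame p) i (Suc j) = Some a" "pix (frame p) (Suc i) (Suc j) = Some b" "a \<noteq> b"
    unfolding V_tile by auto
  then show "(a,b) \<in> Vg (pix p) (nrows p) (ncols p)"
  proof cases
    case 1 then show ?thesis using VF[OF p, of i j a b] ij by simp
  next
    case 2 then show ?thesis using VF[OF p, of i "Suc j" a b] ij by simp
  qed
next
  assume "(a,b) \<in> Vg (pix p) (nrows p) (ncols p)"
  then obtain i j where h: "a = pix p i j" "b = pix p (Suc i) j" "Suc i < nrows p" "j < ncols p" "a \<noteq> b"
    unfolding Vg_def by auto
  let ?t = "[[pix (frame p) (Suc i) (Suc j), pix (frame p) (Suc i) (Suc (Suc j))],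
             [pix (frame p) (Suc (Suc i)) (Suc j), pix (frame p) (Suc (Suc i)) (Suc (Suc j))]]"
  have "?t \<in> subtiles (frame p)" unfolding subtiles_frame[OF p]
    by (rule exI[of _ "Suc i"], rule exI[of _ "Suc j"]) (use h in simp)
  moreover have "pix (frame p) (Suc i) (Suc j) = Some a" 
    unfolding h(1) by (rule Finner[OF p]) (use h in simp_all)
  moreover have "pix (frame p) (Suc (Suc i)) (Suc j) = Some b"
    unfolding h(2) by (rule Finner[OF p]) (use h in simp_all)
  ultimately have "?t \<in> subtiles (frame p)" "(Some a, Some b) \<in> V_rel ?t"
    using h(5) unfolding V_tile by simp_all
  then show "\<exists>t\<in>subtiles (frame p). (Some a, Some b) \<in> V_rel t" by blast
qed

lemma HV_Sigma:
  assumes p: "p \<in> pictures \<Sigma>" and "(a,b) \<in> Hg (pix p) (nrows p) (ncols p) \<or> (a,b) \<in> Vg (pix p) (nrows p) (ncols p)"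
  shows "a \<in> \<Sigma> \<and> b \<in> \<Sigma>"
proof -
  have G: "pix p i j \<in> \<Sigma>" if "i < nrows p" "j < ncols p" for i j using pic_facts(4)[OF p that] .
  from assms(2) show ?thesis
  proof
    assume "(a,b) \<in> Hg (pix p) (nrows p) (ncols p)"
    then obtain i j where h: "a = pix p i j" "b = pix p i (Suc j)" "i < nrows p" "Suc j < ncols p"
      unfolding Hg_def by blast
    then show ?thesis using G[of i j] G[of i "Suc j"] by simp
  next
    assume "(a,b) \<in> Vg (pix p) (nrows p) (ncols p)"
    then obtain i j where h: "a = pix p i j" "b = pix p (Suc i) j" "Suc i < nrows p" "j < ncols p"
      unfolding Vg_def by blast
    then show ?thesis using G[of i j] G[of "Suc i" j] by simp
  qed
qed

lemma restrA:
  assumes p: "p \<in> pictures \<Sigma>"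
  shows "restrict_Sigma \<Sigma> (A_set (subtiles (frame p))) = Adj (pix p) (nrows p) (ncols p)"
proof (intro set_eqI)
  fix x :: "'a \<times> 'a"
  obtain a b where x: "x = (a,b)" by fastforce
  have "x \<in> restrict_Sigma \<Sigma> (A_set (subtiles (frame p))) \<longleftrightarrow>
     a \<in> \<Sigma> \<and> b \<in> \<Sigma> \<and> ((\<exists>t\<in>subtiles (frame p). (Some a, Some b) \<in> H_rel t) \<or> (\<exists>t\<in>subtiles (frame p). (Some a, Some b) \<in> V_rel t))"
    unfolding x restrict_Sigma_def A_set_def A_tile_def by blast
  also have "\<dots> \<longleftrightarrow> a \<in> \<Sigma> \<and> b \<in> \<Sigma> \<and> ((a,b) \<in> Hg (pix p) (nrows p) (ncols p) \<or> (a,b) \<in> Vg (pix p) (nrows p) (ncols p))"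
    unfolding PH[OF p] PV[OF p] ..
  also have "\<dots> \<longleftrightarrow> x \<in> Adj (pix p) (nrows p) (ncols p)"
    unfolding x Adj_def using HV_Sigma[OF p, of a b] by blast
  finally show "x \<in> restrict_Sigma \<Sigma> (A_set (subtiles (frame p))) \<longleftrightarrow> x \<in> Adj (pix p) (nrows p) (ncols p)" .
qed

lemma restrA':
  assumes p: "p \<in> pictures \<Sigma>"
  shows "restrict_Sigma \<Sigma> (A'_set (subtiles (frame p))) = Adj (mir (ncols p) (pix p)) (nrows p) (ncols p)"
proof (intro set_eqI)
  fix x :: "'a \<times> 'a"
  obtain a b where x: "x = (a,b)" by fastforce
  have "x \<in> restrict_Sigma \<Sigma> (A'_set (subtiles (frame p))) \<longleftrightarrow>
     a \<in> \<Sigma> \<and> b \<in> \<Sigma> \<and> ((\<exists>t\<in>subtiles (frame p). (Some b, Some a) \<in> H_rel t) \<or> (\<exists>t\<in>subtiles (frame p). (Some a, Some b) \<in> V_rel t))"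
    unfolding x restrict_Sigma_def A'_set_def A'_tile_def by blast
  also have "\<dots> \<longleftrightarrow> a \<in> \<Sigma> \<and> b \<in> \<Sigma> \<and> ((b,a) \<in> Hg (pix p) (nrows p) (ncols p) \<or> (a,b) \<in> Vg (pix p) (nrows p) (ncols p))"
    unfolding PH[OF p] PV[OF p] ..
  also have "\<dots> \<longleftrightarrow> x \<in> Adj (mir (ncols p) (pix p)) (nrows p) (ncols p)"
    unfolding x Adj_mir using HV_Sigma[OF p, of a b] HV_Sigma[OF p, of b a] by blast
  finally show "x \<in> restrict_Sigma \<Sigma> (A'_set (subtiles (frame p))) \<longleftrightarrow> x \<in> Adj (mir (ncols p) (pix p)) (nrows p) (ncols p)" .
qed



lemma some_pix:
  fixes D :: "(nat \<times> nat) set"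
  assumes "(i,j) \<in> D" "\<forall>u\<in>D. pix p (fst u) (snd u) = pix p i j"
  shows "pix p (fst (SOME u. u \<in> D)) (snd (SOME u. u \<in> D)) = pix p i j"
proof -
  have "(SOME u. u \<in> D) \<in> D" using assms(1) by (rule someI)
  then show ?thesis using assms(2) by blast
qed

lemma regional_conv:
  assumes p: "p \<in> pictures \<Sigma>" and r: "regional_pic p"
  shows "conv (pix p) (nrows p) (ncols p)"
proof -
  obtain P lab where hp: "homogeneous_partition p P" and hl: "\<forall>D\<in>P. homogeneous p D (lab D)" and inj: "inj_on lab P"
    using r unfolding regional_pic_def regional_partition_def by blast
  have U: "\<Union>P = positions p" and sd: "\<And>D. D \<in> P \<Longrightarrow> is_subdomain p D"
    using hp unfolding homogeneous_partition_def by blast+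
  have cell: "\<exists>D\<in>P. (i,j) \<in> D \<and> pix p i j = lab D" if "i < nrows p" "j < ncols p" for i j
  proof -
    have "(i,j) \<in> positions p" using that unfolding positions_def by simp
    then obtain D where D: "D \<in> P" "(i,j) \<in> D" using U by blast
    then have "pix p i j = lab D" using hl unfolding homogeneous_def by blast
    then show ?thesis using D by blast
  qed
  show ?thesis unfolding conv_def
  proof (intro allI impI)
    fix i j i' j' k l
    assume h: "i < nrows p" "j < ncols p" "i' < nrows p" "j' < ncols p" "pix p i j = pix p i' j'"
      "min i i' \<le> k" "k \<le> max i i'" "min j j' \<le> l" "l \<le> max j j'"
    obtain D where D: "D \<in> P" "(i,j) \<in> D" "pix p i j = lab D" using cell h by blast
    obtain D' where D': "D' \<in> P" "(i',j') \<in> D'" "pix p i' j' = lab D'" using cell h by blast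
    have "D = D'" using inj D D' h(5) unfolding inj_on_def by metis
    obtain x x' y y' where xy: "D = {x..x'} \<times> {y..y'}" using sd[OF D(1)] unfolding is_subdomain_def by blast
    have "(k,l) \<in> D" using D(2) D'(2) h(6-9) unfolding xy \<open>D = D'\<close>[symmetric] by (auto simp: min_def max_def split: if_splits)
    then have "pix p k l = lab D" using hl D(1) unfolding homogeneous_def by blast
    then show "pix p k l = pix p i j" using D(3) by simp
  qed
qed

lemma conv_regional:
  assumes p: "p \<in> pictures \<Sigma>" and c: "conv (pix p) (nrows p) (ncols p)"
  shows "regional_pic p"
proof -
  define m where "m = nrows p"
  define n where "n = ncols p"
  define cls where "cls i j = {(k,l). k < m \<and> l < n \<and> pix p k l = pix p i j}" for i j
  define P where "P = {cls i j | i j. i < m \<and> j < n}"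
  define lab where "lab D = pix p (fst (SOME u. u \<in> D)) (snd (SOME u. u \<in> D))" for D :: "(nat \<times> nat) set"
  have pos: "positions p = {0..<m} \<times> {0..<n}" unfolding positions_def m_def n_def ..
  have labc: "lab (cls i j) = pix p i j" if "i < m" "j < n" for i j
  proof -
    have "(i,j) \<in> cls i j" using that by (simp add: cls_def)
    moreover have "\<forall>u \<in> cls i j. pix p (fst u) (snd u) = pix p i j"
      unfolding cls_def by auto
    ultimately show ?thesis unfolding lab_def by (rule some_pix)
  qed
  have clseq: "cls i j = cls i' j'" if "pix p i j = pix p i' j'" for i j i' j'
    unfolding cls_def using that by simp
  have hom: "homogeneous p (cls i j) (pix p i j)" for i j
    unfolding homogeneous_def cls_def by auto
  have sub: "is_subdomain p (cls i j)" if "i < m" "j < n" for i j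
  proof -
    have i': "i < nrows p" "j < ncols p" using that unfolding m_def n_def by simp_all
    obtain x x' y y' where b0: "x \<le> x' \<and> x' < nrows p \<and> y \<le> y' \<and> y' < ncols p \<and>
      (\<forall>k l. k < nrows p \<longrightarrow> l < ncols p \<longrightarrow> (pix p k l = pix p i j \<longleftrightarrow> x \<le> k \<and> k \<le> x' \<and> y \<le> l \<and> l \<le> y'))"
      using box_of_conv[OF c i'] by (elim exE) (rule that)
    have b: "x \<le> x'" "x' < m" "y \<le> y'" "y' < n"
      "\<forall>k l. k < m \<longrightarrow> l < n \<longrightarrow> (pix p k l = pix p i j \<longleftrightarrow> x \<le> k \<and> k \<le> x' \<and> y \<le> l \<and> l \<le> y')"
      using b0 unfolding m_def n_def by blast+
    have "cls i j = {x..x'} \<times> {y..y'}"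
    proof (intro set_eqI iffI)
      fix u assume "u \<in> cls i j" then show "u \<in> {x..x'} \<times> {y..y'}" using b(5) unfolding cls_def by auto
    next
      fix u assume u: "u \<in> {x..x'} \<times> {y..y'}"
      then have "fst u < m" "snd u < n" using b by auto
      then show "u \<in> cls i j" using b(5) u unfolding cls_def by auto
    qed
    then show ?thesis unfolding is_subdomain_def using b(1-4) unfolding m_def n_def by blast
  qed
  have "homogeneous_partition p P"
    unfolding homogeneous_partition_def
  proof (intro conjI ballI impI)
    show "\<Union>P = positions p"
    proof
      show "\<Union>P \<subseteq> positions p" unfolding P_def pos cls_def by auto
      show "positions p \<subseteq> \<Union>P"
      proof
        fix u assume "u \<in> positions p"
        then obtain i j where u: "u = (i,j)" "i < m" "j < n" unfolding pos by auto
        then have "u \<in> cls i j" by (simp add: cls_def)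
        moreover have "cls i j \<in> P" using u unfolding P_def by blast
        ultimately show "u \<in> \<Union>P" by blast
      qed
    qed
  next
    fix D assume "D \<in> P"
    then obtain i j where D: "D = cls i j" "i < m" "j < n" unfolding P_def by blast
    show "is_subdomain p D" using sub[OF D(2,3)] D(1) by simp
    show "\<exists>c. homogeneous p D c" using hom D(1) by blast
  next
    fix D D' assume DD: "D \<in> P" "D' \<in> P" "D \<noteq> D'"
    obtain i j where D: "D = cls i j" "i < m" "j < n" using DD(1) unfolding P_def by blast
    obtain i' j' where D': "D' = cls i' j'" "i' < m" "j' < n" using DD(2) unfolding P_def by blast
    show "D \<inter> D' = {}"
    proof (rule ccontr)
      assume "D \<inter> D' \<noteq> {}"
      then obtain u where u: "u \<in> cls i j" "u \<in> cls i' j'" using D D' by blast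
      then have "pix p i j = pix p i' j'" unfolding cls_def by (cases u) simp
      then have "cls i j = cls i' j'" by (rule clseq)
      then show False using DD(3) D D' by simp
    qed
  qed
  moreover have "\<forall>D\<in>P. homogeneous p D (lab D)"
  proof
    fix D assume "D \<in> P"
    then obtain i j where D: "D = cls i j" "i < m" "j < n" unfolding P_def by blast
    have "lab D = pix p i j" using labc[OF D(2,3)] D(1) by simp
    then show "homogeneous p D (lab D)" using hom[of i j] D(1) by simp
  qed
  moreover have "inj_on lab P"
  proof (rule inj_onI)
    fix D D' assume DD: "D \<in> P" "D' \<in> P" "lab D = lab D'"
    obtain i j where D: "D = cls i j" "i < m" "j < n" using DD(1) unfolding P_def by blast
    obtain i' j' where D': "D' = cls i' j'" "i' < m" "j' < n" using DD(2) unfolding P_def by blast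
    have "lab D = pix p i j" using labc[OF D(2,3)] D(1) by simp
    moreover have "lab D' = pix p i' j'" using labc[OF D'(2,3)] D'(1) by simp
    ultimately have "pix p i j = pix p i' j'" using DD(3) by simp
    then have "cls i j = cls i' j'" by (rule clseq)
    then show "D = D'" using D(1) D'(1) by simp
  qed
  ultimately have "regional_partition p P" unfolding regional_partition_def by blast
  then show ?thesis unfolding regional_pic_def by blast
qed



lemma LOC_D: "q \<in> LOC \<Sigma> \<theta> \<Longrightarrow> q \<in> pictures \<Sigma> \<and> subtiles (frame q) \<subseteq> \<theta>"
  unfolding LOC_def by blast

lemma LOC_I: "q \<in> pictures \<Sigma> \<Longrightarrow> subtiles (frame q) \<subseteq> \<theta> \<Longrightarrow> q \<in> LOC \<Sigma> \<theta>"
  unfolding LOC_def by blast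

lemma subtiles_ne:
  assumes p: "p \<in> pictures \<Sigma>" shows "subtiles (frame p) \<noteq> {}"
proof -
  have "[[pix (frame p) 0 0, pix (frame p) 0 (Suc 0)], [pix (frame p) (Suc 0) 0, pix (frame p) (Suc 0) (Suc 0)]] \<in> subtiles (frame p)"
    unfolding subtiles_frame[OF p] by (rule exI[of _ 0], rule exI[of _ 0]) simp
  then show ?thesis by blast
qed

lemma restrict_mono: "R \<subseteq> R' \<Longrightarrow> restrict_Sigma \<Sigma> R \<subseteq> restrict_Sigma \<Sigma> R'"
  unfolding restrict_Sigma_def by blast

lemma A_set_mono: "T \<subseteq> T' \<Longrightarrow> A_set T \<subseteq> A_set T'"
  unfolding A_set_def by blast

lemma A'_set_mono: "T \<subseteq> T' \<Longrightarrow> A'_set T \<subseteq> A'_set T'"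
  unfolding A'_set_def by blast

lemma sr_pic:
  assumes p: "p \<in> pictures \<Sigma>" and r: "regional_pic p"
  shows "simple_regional \<Sigma> (subtiles (frame p))"
proof -
  have c: "conv (pix p) (nrows p) (ncols p)" by (rule regional_conv[OF p r])
  show ?thesis unfolding simple_regional_def restrA[OF p] restrA'[OF p]
    using conv_acyc[OF c] conv_acyc[OF conv_mir[OF c]] by simp
qed

lemma reg_of_loc:
  assumes q: "q \<in> LOC \<Sigma> \<theta>" and sr: "simple_regional \<Sigma> \<theta>"
  shows "regional_pic q"
proof -
  have p: "q \<in> pictures \<Sigma>" and sub: "subtiles (frame q) \<subseteq> \<theta>" using LOC_D[OF q] by auto
  have a1: "acyclic (restrict_Sigma \<Sigma> (A_set \<theta>))" and a2: "acyclic (restrict_Sigma \<Sigma> (A'_set \<theta>))"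
    using sr unfolding simple_regional_def by auto
  have "Adj (pix q) (nrows q) (ncols q) \<subseteq> restrict_Sigma \<Sigma> (A_set \<theta>)"
    unfolding restrA[OF p, symmetric] by (rule restrict_mono[OF A_set_mono[OF sub]])
  then have b1: "acyclic (Adj (pix q) (nrows q) (ncols q))" using a1 acyclic_subset by blast
  have "Adj (mir (ncols q) (pix q)) (nrows q) (ncols q) \<subseteq> restrict_Sigma \<Sigma> (A'_set \<theta>)"
    unfolding restrA'[OF p, symmetric] by (rule restrict_mono[OF A'_set_mono[OF sub]])
  then have b2: "acyclic (Adj (mir (ncols q) (pix q)) (nrows q) (ncols q))" using a2 acyclic_subset by blast
  show ?thesis by (rule conv_regional[OF p acyc_conv[OF b1 b2]])
qed

lemma sr_empty: "simple_regional \<Sigma> {}"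
  unfolding simple_regional_def A_set_def A'_set_def restrict_Sigma_def acyclic_def by simp

lemma tileset_empty: "tileset \<Sigma> {}"
  unfolding tileset_def by simp

lemma tileset_sub: "tileset \<Sigma> \<theta> \<Longrightarrow> T \<subseteq> \<theta> \<Longrightarrow> tileset \<Sigma> T"
  unfolding tileset_def using finite_subset by blast

theorem proposition4:
  fixes \<Sigma> :: "'a set" and L :: "'a picture set"
  assumes "finite \<Sigma>" and "local_lang \<Sigma> L"
  shows "regional_lang L \<longleftrightarrow>
    (\<exists>n::nat. \<exists>\<theta> :: nat \<Rightarrow> 'a option picture set. n \<ge> 1 \<and>
       (\<forall>i\<in>{1..n}. tileset \<Sigma> (\<theta> i) \<and> simple_regional \<Sigma> (\<theta> i)) \<and>
       L = (\<Union>i\<in>{1..n}. LOC \<Sigma> (\<theta> i)))"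
proof -
  obtain \<theta>0 where t0: "tileset \<Sigma> \<theta>0" and L0: "L = LOC \<Sigma> \<theta>0"
    using assms(2) unfolding local_lang_def by blast
  show ?thesis
  proof
    assume RL: "regional_lang L"
    define T where "T = (\<lambda>p. subtiles (frame p)) ` L"
    have "T \<subseteq> Pow \<theta>0" unfolding T_def L0 using LOC_D by blast
    moreover have "finite \<theta>0" using t0 unfolding tileset_def by simp
    ultimately have "finite T" by (meson finite_Pow_iff finite_subset)
    then obtain xs where xs: "set xs = T" using finite_list by blast
    define \<theta> where "\<theta> i = (if 1 \<le> i \<and> i \<le> length xs then xs ! (i - 1) else {})" for i
    have cases_th: "(\<exists>p\<in>L. \<theta> i = subtiles (frame p)) \<or> \<theta> i = {}" for i
    proof (cases "1 \<le> i \<and> i \<le> length xs")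
      case True
      then have "xs ! (i - 1) \<in> T" using xs by (metis One_nat_def Suc_le_eq Suc_pred nth_mem le_less_trans lessI)
      then show ?thesis using True unfolding \<theta>_def T_def by auto
    next
      case False then show ?thesis unfolding \<theta>_def by auto
    qed
    have "Suc (length xs) \<ge> 1 \<and>
       (\<forall>i\<in>{1..Suc (length xs)}. tileset \<Sigma> (\<theta> i) \<and> simple_regional \<Sigma> (\<theta> i)) \<and>
       L = (\<Union>i\<in>{1..Suc (length xs)}. LOC \<Sigma> (\<theta> i))"
    proof (intro conjI)
      show "Suc (length xs) \<ge> 1" by simp
    next
      show "\<forall>i\<in>{1..Suc (length xs)}. tileset \<Sigma> (\<theta> i) \<and> simple_regional \<Sigma> (\<theta> i)"
      proof
      fix i
      from cases_th[of i] show "tileset \<Sigma> (\<theta> i) \<and> simple_regional \<Sigma> (\<theta> i)"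
      proof
        assume "\<exists>p\<in>L. \<theta> i = subtiles (frame p)"
        then obtain p where p: "p \<in> L" "\<theta> i = subtiles (frame p)" by blast
        have pl: "p \<in> LOC \<Sigma> \<theta>0" using p(1) L0 by simp
        have "tileset \<Sigma> (\<theta> i)" using tileset_sub[OF t0] LOC_D[OF pl] p(2) by simp
        moreover have "simple_regional \<Sigma> (\<theta> i)"
          using sr_pic[of p \<Sigma>] LOC_D[OF pl] RL p unfolding regional_lang_def by simp
        ultimately show ?thesis ..
      next
        assume "\<theta> i = {}" then show ?thesis using tileset_empty[of \<Sigma>] sr_empty[of \<Sigma>] by simp
      qed
      qed
    next
      show "L = (\<Union>i\<in>{1..Suc (length xs)}. LOC \<Sigma> (\<theta> i))"
      proof
        show "L \<subseteq> (\<Union>i\<in>{1..Suc (length xs)}. LOC \<Sigma> (\<theta> i))"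
        proof
          fix p assume p: "p \<in> L"
          then have "subtiles (frame p) \<in> set xs" using xs unfolding T_def by blast
          then obtain k where k: "k < length xs" "xs ! k = subtiles (frame p)" by (meson in_set_conv_nth)
          have th: "\<theta> (Suc k) = subtiles (frame p)" using k unfolding \<theta>_def by simp
          have "p \<in> pictures \<Sigma>" using p L0 LOC_D by blast
          then have "p \<in> LOC \<Sigma> (\<theta> (Suc k))" using th LOC_I by blast
          moreover have "Suc k \<in> {1..Suc (length xs)}" using k by simp
          ultimately show "p \<in> (\<Union>i\<in>{1..Suc (length xs)}. LOC \<Sigma> (\<theta> i))" by blast
        qed
      next
        show "(\<Union>i\<in>{1..Suc (length xs)}. LOC \<Sigma> (\<theta> i)) \<subseteq> L"
        proof
          fix q assume "q \<in> (\<Union>i\<in>{1..Suc (length xs)}. LOC \<Sigma> (\<theta> i))"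
          then obtain i where q: "q \<in> LOC \<Sigma> (\<theta> i)" by blast
          have qp: "q \<in> pictures \<Sigma>" "subtiles (frame q) \<subseteq> \<theta> i" using LOC_D[OF q] by auto
          from cases_th[of i] show "q \<in> L"
          proof
            assume "\<exists>p\<in>L. \<theta> i = subtiles (frame p)"
            then obtain p where p: "p \<in> L" "\<theta> i = subtiles (frame p)" by blast
            have "subtiles (frame p) \<subseteq> \<theta>0" using p(1) L0 LOC_D by blast
            then have "q \<in> LOC \<Sigma> \<theta>0" using qp p(2) LOC_I by blast
            then show ?thesis using L0 by simp
          next
            assume "\<theta> i = {}"
            then show ?thesis using qp subtiles_ne[OF qp(1)] by simp
          qed
        qed
      qed
    qed
    then show "\<exists>n::nat. \<exists>\<theta> :: nat \<Rightarrow> 'a option picture set. n \<ge> 1 \<and>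
       (\<forall>i\<in>{1..n}. tileset \<Sigma> (\<theta> i) \<and> simple_regional \<Sigma> (\<theta> i)) \<and>
       L = (\<Union>i\<in>{1..n}. LOC \<Sigma> (\<theta> i))" by blast
  next
    assume "\<exists>n::nat. \<exists>\<theta> :: nat \<Rightarrow> 'a option picture set. n \<ge> 1 \<and>
       (\<forall>i\<in>{1..n}. tileset \<Sigma> (\<theta> i) \<and> simple_regional \<Sigma> (\<theta> i)) \<and>
       L = (\<Union>i\<in>{1..n}. LOC \<Sigma> (\<theta> i))"
    then obtain n and \<theta> :: "nat \<Rightarrow> 'a option picture set" where
      h: "\<forall>i\<in>{1..n}. tileset \<Sigma> (\<theta> i) \<and> simple_regional \<Sigma> (\<theta> i)" "L = (\<Union>i\<in>{1..n}. LOC \<Sigma> (\<theta> i))"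
      by blast
    show "regional_lang L" unfolding regional_lang_def
    proof
      fix p assume "p \<in> L"
      then obtain i where i: "i \<in> {1..n}" "p \<in> LOC \<Sigma> (\<theta> i)" using h(2) by blast
      show "regional_pic p" by (rule reg_of_loc[OF i(2)]) (use h(1) i(1) in blast)
    qed
  qed
qed


end
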